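(* Let $n\in\mathbb{N}$, let $p_1,\ldots,p_n\in\mathbb{H}$ with $p_n\neq 0$, let $d_0\in\{0,1\}$, and consider the equation $$p_nx^n+\cdots+p_1x+d_0=0,\qquad x\in\mathbb{H}.$$ Write $p_i=t_1^{(i)}+t_2^{(i)}\mathbf{j}$ with $t_1^{(i)},t_2^{(i)}\in\mathbb{C}$ ($i=1,\ldots,n$), and define the derived polynomials (in a complex variable $t$) $$f_1(t)=t_1^{(n)}t^n+\cdots+t_1^{(1)}t+d_0,\qquad f_2(t)=t_2^{(n)}t^n+\cdots+t_2^{(1)}t,$$ $$\bar f_1(t)=\overline{t_1^{(n)}}t^n+\cdots+\overline{t_1^{(1)}}t+d_0,\qquad \bar f_2(t)=\overline{t_2^{(n)}}t^n+\cdots+\overline{t_2^{(1)}}t,$$ and the discriminant polynomial $\tilde p(t)=f_1(t)\bar f_1(t)+f_2(t)\bar f_2(t)$, which has real coefficients. Let $\xi_1,\ldots,\xi_s$ be the distinct real roots of $\tilde p$, and let the distinct nonreal roots of $\tilde p$ be $\eta_1,\overline{\eta_1},\ldots,\eta_k,\overline{\eta_k}$ (one representative $\eta_i$ chosen from each conjugate pair). Put $$T_1=\{\eta\in\{\eta_1,\ldots,\eta_k\}: f_1(\eta)=f_2(\eta)=\bar f_1(\eta)=\bar f_2(\eta)=0\},\qquad T_2=\{\eta_1,\ldots,\eta_k\}\setminus T_1.$$ Then the solution set of the equation in $\mathbb{H}$ is the disjoint union $$\{\xi_1,\ldots,\xi_s\}\ \dot\cup\ \dot{\bigcup_{\eta_i\in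 T_2}}\{\omega_i\}\ \dot\cup\ \dot{\bigcup_{\eta_i\in T_1}}[\eta_i],$$ where, if $|f_1(\eta_i)|^2+|f_2(\eta_i)|^2\neq 0$, $$\omega_i=\frac{1}{|f_1(\eta_i)|^2+|f_2(\eta_i)|^2}\Big\{|f_2(\eta_i)|^2\eta_i+|f_1(\eta_i)|^2\overline{\eta_i}-2f_2(\eta_i)\overline{f_1(\eta_i)}(\operatorname{Im}\eta_i)\mathbf{k}\Big\},$$ and otherwise $$\omega_i=\frac{1}{|f_1(\overline{\eta_i})|^2+|f_2(\overline{\eta_i})|^2}\Big\{|f_1(\overline{\eta_i})|^2\eta_i+|f_2(\overline{\eta_i})|^2\overline{\eta_i}+2f_2(\overline{\eta_i})\overline{f_1(\overline{\eta_i})}(\operatorname{Im}\eta_i)\mathbf{k}\Big\}.$$ Here $\operatorname{Im}\eta_i$ is the (real) imaginary part of $\eta_i$. Moreover, $\{\xi_1,\ldots,\xi_s\}\cup\bigcup_{\eta_i\in T_2}\{\omega_i\}$ is exactly the set of isolated zeros and $\bigcup_{\eta_i\in T_1}[\eta_i]$ is exactly the set of spherical zeros of $p(x)=p_nx^n+\cdots+p_1x+d_0$.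
   Context: $\mathbb{H}$ denotes the real quaternions with units $\mathbf{i},\mathbf{j},\mathbf{k}$ ($\mathbf{i}^2=\mathbf{j}^2=\mathbf{k}^2=-1$, $\mathbf{ij}=-\mathbf{ji}=\mathbf{k}$, etc.), and $\mathbb{C}=\mathbb{R}\oplus\mathbb{R}\mathbf{i}\subset\mathbb{H}$. For $q\in\mathbb{H}$, $[q]=\{aqa^{-1}: a\in\mathbb{H}, a\neq 0\}$ is its conjugacy class. For a complex number $z$, $|z|$ is its modulus and $\bar z$ its complex conjugate. A zero $z_0$ of a polynomial $p(x)=\sum p_ix^i$ (coefficients on the left) is called spherical if $z_0$ is not real and $p(z)=0$ for all $z\in[z_0]$; a zero that is real or not spherical is called isolated. *)

theory Defs
  imports "HOL-Analysis.Analysis"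
begin

datatype quat = Quat (qre: real) (qi: real) (qj: real) (qk: real)

instantiation quat :: "{zero, one, plus, minus, uminus, times, inverse}"
begin
definition "0 = Quat 0 0 0 0"
definition "1 = Quat 1 0 0 0"
definition "x + y = Quat (qre x + qre y) (qi x + qi y) (qj x + qj y) (qk x + qk y)"
definition "x - y = Quat (qre x - qre y) (qi x - qi y) (qj x - qj y) (qk x - qk y)"
definition "- x = Quat (- qre x) (- qi x) (- qj x) (- qk x)"
definition "x * y = Quat
   (qre x * qre y - qi x * qi y - qj x * qj y - qk x * qk y)
   (qre x * qi y + qi x * qre y + qj x * qk y - qk x * qj y)
   (qre x * qj y - qi x * qk y + qj x * qre y + qk x * qi y)
   (qre x * qk y + qi x * qj y - qj x * qi y + qk x * qre y)"
definition "inverse x = (let n = (qre x)^2 + (qi x)^2 + (qj x)^2 + (qk x)^2 in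
   Quat (qre x / n) (- qi x / n) (- qj x / n) (- qk x / n))"
definition "x div (y::quat) = x * inverse y"
instance ..
end

lemma quat_eq_iff: "x = y \<longleftrightarrow> qre x = qre y \<and> qi x = qi y \<and> qj x = qj y \<and> qk x = qk y"
  by (cases x; cases y) auto

lemma quat_simps [simp]:
  "qre 0 = 0" "qi 0 = 0" "qj 0 = 0" "qk 0 = 0"
  "qre 1 = 1" "qi 1 = 0" "qj 1 = 0" "qk 1 = 0"
  "qre (x + y) = qre x + qre y" "qi (x + y) = qi x + qi y"
  "qj (x + y) = qj x + qj y" "qk (x + y) = qk x + qk y"
  "qre (x - y) = qre x - qre y" "qi (x - y) = qi x - qi y"
  "qj (x - y) = qj x - qj y" "qk (x - y) = qk x - qk y"
  "qre (- x) = - qre x" "qi (- x) = - qi x" "qj (- x) = - qj x" "qk (- x) = - qk x"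
  "qre (x * y) = qre x * qre y - qi x * qi y - qj x * qj y - qk x * qk y"
  "qi (x * y) = qre x * qi y + qi x * qre y + qj x * qk y - qk x * qj y"
  "qj (x * y) = qre x * qj y - qi x * qk y + qj x * qre y + qk x * qi y"
  "qk (x * y) = qre x * qk y + qi x * qj y - qj x * qi y + qk x * qre y"
  by (simp_all add: zero_quat_def one_quat_def plus_quat_def minus_quat_def
      uminus_quat_def times_quat_def)

instance quat :: ring_1
  by standard (simp_all add: quat_eq_iff algebra_simps)

definition qI :: quat where "qI = Quat 0 1 0 0"
definition qJ :: quat where "qJ = Quat 0 0 1 0"
definition qK :: quat where "qK = Quat 0 0 0 1"

definition quat_of_real :: "real \<Rightarrow> quat" where
  "quat_of_real r = Quat r 0 0 0"

definition quat_of_complex :: "complex \<Rightarrow> quat" where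
  "quat_of_complex z = Quat (Re z) (Im z) 0 0"

definition quat_is_real :: "quat \<Rightarrow> bool" where
  "quat_is_real q \<longleftrightarrow> qi q = 0 \<and> qj q = 0 \<and> qk q = 0"

definition conj_class :: "quat \<Rightarrow> quat set" where
  "conj_class q = {a * q * inverse a | a. a \<noteq> 0}"

definition spherical_zero :: "(quat \<Rightarrow> quat) \<Rightarrow> quat \<Rightarrow> bool" where
  "spherical_zero P z \<longleftrightarrow> P z = 0 \<and> \<not> quat_is_real z \<and> (\<forall>w\<in>conj_class z. P w = 0)"

definition isolated_zero :: "(quat \<Rightarrow> quat) \<Rightarrow> quat \<Rightarrow> bool" where
  "isolated_zero P z \<longleftrightarrow> P z = 0 \<and> \<not> spherical_zero P z"

end

theory Submission
  imports Defs
begin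

lemma qc_simps[simp]:
  "qre qI = 0" "qi qI = 1" "qj qI = 0" "qk qI = 0"
  "qre qJ = 0" "qi qJ = 0" "qj qJ = 1" "qk qJ = 0"
  "qre qK = 0" "qi qK = 0" "qj qK = 0" "qk qK = 1"
  "qre (quat_of_real r) = r" "qi (quat_of_real r) = 0" "qj (quat_of_real r) = 0" "qk (quat_of_real r) = 0"
  "qre (quat_of_complex z) = Re z" "qi (quat_of_complex z) = Im z" "qj (quat_of_complex z) = 0" "qk (quat_of_complex z) = 0"
  "qre (Quat a b c d) = a" "qi (Quat a b c d) = b" "qj (Quat a b c d) = c" "qk (Quat a b c d) = d"
  by (simp_all add: qI_def qJ_def qK_def quat_of_real_def quat_of_complex_def)

lemma core2:
 fixes A B :: quat and F1 G1 F2 G2 :: complex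
 assumes h1: "A + B*qI = quat_of_complex F1 + quat_of_complex G1 * qJ"
   and h2: "A - B*qI = quat_of_complex F2 + quat_of_complex G2 * qJ"
   and h3: "F1 * cnj F2 + G2 * cnj G1 = 0"
   and D: "D = (cmod F1)^2 + (cmod G2)^2" "D \<noteq> 0"
 shows "A + B*Quat 0 (((cmod G2)^2 - (cmod F1)^2)/D) (2*Im(G2*cnj F1)/D) (-2*Re(G2*cnj F1)/D) = 0"
proof -
  from h1 h2 have e: "qre A - qi B = Re F1" "qi A + qre B = Im F1" "qj A + qk B = Re G1" "qk A - qj B = Im G1"
     "qre A + qi B = Re F2" "qi A - qre B = Im F2" "qj A - qk B = Re G2" "qk A + qj B = Im G2"
    by (simp_all add: quat_eq_iff)
  from h3 have r: "Re F1 * Re F2 + Im F1 * Im F2 + Re G2 * Re G1 + Im G2 * Im G1 = 0"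
     and i: "Im F1 * Re F2 - Re F1 * Im F2 + Im G2 * Re G1 - Re G2 * Im G1 = 0"
    by (simp_all add: complex_eq_iff)
  have D': "D = (Re F1)^2 + (Im F1)^2 + (Re G2)^2 + (Im G2)^2" using D by (simp add: cmod_power2)
  have a: "qre A = (Re F1 + Re F2)/2" "qi A = (Im F1 + Im F2)/2" "qj A = (Re G1 + Re G2)/2" "qk A = (Im G1 + Im G2)/2"
     "qre B = (Im F1 - Im F2)/2" "qi B = (Re F2 - Re F1)/2" "qj B = (Im G2 - Im G1)/2" "qk B = (Re G1 - Re G2)/2"
    by (insert e; simp add: field_simps; linarith)+
  show ?thesis
    using D(2) apply (simp add: quat_eq_iff a cmod_power2 field_simps)
    using r i D' by algebra
qed


lemma core2b:
 fixes A B :: quat and F1 G1 F2 G2 :: complex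
 assumes h1: "A + B*qI = quat_of_complex F1 + quat_of_complex G1 * qJ"
   and h2: "A - B*qI = quat_of_complex F2 + quat_of_complex G2 * qJ"
   and h3: "F1 * cnj F2 + G2 * cnj G1 = 0"
   and D: "D = (cmod F2)^2 + (cmod G1)^2" "D \<noteq> 0"
 shows "A + B*Quat 0 (((cmod F2)^2 - (cmod G1)^2)/D) (-2*Im(G1*cnj F2)/D) (2*Re(G1*cnj F2)/D) = 0"
proof -
  from h1 h2 have e: "qre A - qi B = Re F1" "qi A + qre B = Im F1" "qj A + qk B = Re G1" "qk A - qj B = Im G1"
     "qre A + qi B = Re F2" "qi A - qre B = Im F2" "qj A - qk B = Re G2" "qk A + qj B = Im G2"
    by (simp_all add: quat_eq_iff)
  from h3 have r: "Re F1 * Re F2 + Im F1 * Im F2 + Re G2 * Re G1 + Im G2 * Im G1 = 0"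
     and i: "Im F1 * Re F2 - Re F1 * Im F2 + Im G2 * Re G1 - Re G2 * Im G1 = 0"
    by (simp_all add: complex_eq_iff)
  have D': "D = (Re F2)^2 + (Im F2)^2 + (Re G1)^2 + (Im G1)^2" using D by (simp add: cmod_power2)
  have a: "qre A = (Re F1 + Re F2)/2" "qi A = (Im F1 + Im F2)/2" "qj A = (Re G1 + Re G2)/2" "qk A = (Im G1 + Im G2)/2"
     "qre B = (Im F1 - Im F2)/2" "qi B = (Re F2 - Re F1)/2" "qj B = (Im G2 - Im G1)/2" "qk B = (Re G1 - Re G2)/2"
    by (insert e; simp add: field_simps; linarith)+
  show ?thesis
    using D(2) apply (simp add: quat_eq_iff a cmod_power2 field_simps)
    using r i D' by algebra
qed

lemma core1:
 fixes A B u :: quat and F1 G1 F2 G2 :: complex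
 assumes h1: "A + B*qI = quat_of_complex F1 + quat_of_complex G1 * qJ"
   and h2: "A - B*qI = quat_of_complex F2 + quat_of_complex G2 * qJ"
   and u: "qre u = 0" "(qi u)^2 + (qj u)^2 + (qk u)^2 = 1"
   and z: "A + B * u = 0"
 shows "F1 * cnj F2 + G2 * cnj G1 = 0"
proof -
  from h1 h2 have e: "qre A - qi B = Re F1" "qi A + qre B = Im F1" "qj A + qk B = Re G1" "qk A - qj B = Im G1"
     "qre A + qi B = Re F2" "qi A - qre B = Im F2" "qj A - qk B = Re G2" "qk A + qj B = Im G2"
    by (simp_all add: quat_eq_iff)
  from z have z': "qre A = - (qre B * qre u - qi B * qi u - qj B * qj u - qk B * qk u)"
     "qi A = - (qre B * qi u + qi B * qre u + qj B * qk u - qk B * qj u)"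
     "qj A = - (qre B * qj u - qi B * qk u + qj B * qre u + qk B * qi u)"
     "qk A = - (qre B * qk u + qi B * qj u - qj B * qi u + qk B * qre u)"
    by (simp_all add: quat_eq_iff eq_neg_iff_add_eq_0)
  have "Re F1 * Re F2 + Im F1 * Im F2 + Re G2 * Re G1 + Im G2 * Im G1 = 0"
    unfolding e[symmetric] z' using u by algebra
  moreover have "Im F1 * Re F2 - Re F1 * Im F2 + Im G2 * Re G1 - Re G2 * Im G1 = 0"
    unfolding e[symmetric] z' using u by algebra
  ultimately show ?thesis by (simp add: complex_eq_iff)
qed

definition nsq :: "quat \<Rightarrow> real" where
  "nsq x = (qre x)^2 + (qi x)^2 + (qj x)^2 + (qk x)^2"

lemma nsq_mult: "nsq (x*y) = nsq x * nsq y"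
  unfolding nsq_def by simp algebra

lemma sq4: "(a::real)^2+b^2+c^2+d^2 = 0 \<longleftrightarrow> a=0\<and>b=0\<and>c=0\<and>d=0"
  by (smt (verit) power2_less_eq_zero_iff zero_le_power2)

lemma nsq_eq_0: "nsq x = 0 \<longleftrightarrow> x = 0"
  unfolding nsq_def sq4 by (simp add: quat_eq_iff)

lemma quat_no_zero_div: "(x::quat) * y = 0 \<longleftrightarrow> x = 0 \<or> y = 0"
  by (metis nsq_eq_0 nsq_mult mult_eq_0_iff mult_zero_left mult_zero_right)

lemma quat_inverse_both: "(a::quat) \<noteq> 0 \<Longrightarrow> a * inverse a = 1 \<and> inverse a * a = 1"
proof -
  assume "a \<noteq> 0"
  obtain N where Nd: "N = (qre a)^2 + (qi a)^2 + (qj a)^2 + (qk a)^2" by blast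
  then have N: "N \<noteq> 0" using nsq_eq_0[of a] \<open>a \<noteq> 0\<close> unfolding nsq_def by simp
  have inv: "inverse a = Quat (qre a/N) (-qi a/N) (-qj a/N) (-qk a/N)"
    by (simp add: inverse_quat_def Let_def Nd)
  show ?thesis unfolding quat_eq_iff inv using N
    by (simp add: field_simps) (simp add: Nd power2_eq_square algebra_simps)
qed

lemma quat_inverse_right: "(a::quat) \<noteq> 0 \<Longrightarrow> a * inverse a = 1"
  using quat_inverse_both by blast
lemma quat_inverse_left: "(a::quat) \<noteq> 0 \<Longrightarrow> inverse a * a = 1"
  using quat_inverse_both by blast



definition imsq :: "quat \<Rightarrow> real" where "imsq x = (qi x)^2 + (qj x)^2 + (qk x)^2"

lemma qre_commute: "qre (u * v) = qre (v * (u::quat))" by simp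

lemma cc_eqI: "a \<noteq> 0 \<Longrightarrow> a * x = y * a \<Longrightarrow> y \<in> conj_class x"
proof -
  assume a: "a \<noteq> 0" "a * x = y * a"
  have "y = y * (a * inverse a)" using quat_inverse_right[OF a(1)] by simp
  also have "\<dots> = a * x * inverse a" using a(2) by (simp add: mult.assoc)
  finally show ?thesis unfolding conj_class_def using a(1) by blast
qed

lemma cc_sub: "y \<in> conj_class x \<Longrightarrow> qre y = qre x \<and> imsq y = imsq x"
proof -
  assume "y \<in> conj_class x"
  then obtain a where a: "a \<noteq> 0" "y = a * x * inverse a" unfolding conj_class_def by blast
  have ya: "y * a = a * x" using a quat_inverse_left[OF a(1)] by (simp add: mult.assoc)
  have r: "qre y = qre x"
  proof -
    have "qre y = qre (a * x * inverse a)" using a by simp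
    also have "\<dots> = qre (inverse a * (a * x))" using qre_commute by (metis mult.assoc)
    also have "\<dots> = qre x" using quat_inverse_left[OF a(1)] by (simp add: mult.assoc[symmetric])
    finally show ?thesis .
  qed
  have "nsq y * nsq a = nsq a * nsq x" using ya by (metis nsq_mult)
  then have "nsq y = nsq x" using a(1) nsq_eq_0 by (simp add: mult.commute)
  then show ?thesis using r unfolding nsq_def imsq_def by simp
qed

lemma cc_alg:
  fixes x0 x1 x2 x3 y1 y2 y3 :: real
  assumes "y1^2 + y2^2+y3^2 = x1^2+x2^2+x3^2" "a0 = x1^2+x2^2+x3^2 + y1*x1+y2*x2+y3*x3"
  "a1 = y3*x2 - y2*x3" "a2 = y1 * x3 - y3 * x1" "a3 = y2 * x1 - y1 * x2"
  shows "a0 * x0 - a1 * x1 - a2 * x2 - a3 * x3 = x0 * a0 - y1 * a1 - y2 * a2 - y3 * a3"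
   "a0 * x1 + a1 * x0 + a2 * x3 - a3 * x2 = x0 * a1 + y1 * a0 + y2 * a3 - y3 * a2"
   "a0 * x2 - a1 * x3 + a2 * x0 + a3 * x1 = x0 * a2 - y1 * a3 + y2 * a0 + y3 * a1"
   "a0 * x3 + a1 * x2 - a2 * x1 + a3 * x0 = x0 * a3 + y1 * a2 - y2 * a1 + y3 * a0"
  using assms by algebra+

lemma cc_sup:
  assumes nr: "imsq x \<noteq> 0" and r: "qre y = qre x" and s: "imsq y = imsq x"
  shows "y \<in> conj_class x"
proof -
  define a where "a = Quat (imsq x + qi y * qi x + qj y * qj x + qk y * qk x)
      (qk y * qj x - qj y * qk x) (qi y * qk x - qk y * qi x) (qj y * qi x - qi y * qj x)"
  show ?thesis
  proof (cases "a = 0")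
    case False
    have "a * x = y * a"
      unfolding quat_eq_iff a_def using r s cc_alg[of "qi y" "qj y" "qk y" "qi x" "qj x" "qk x" _ _ _ _ "qre x"] unfolding imsq_def by simp
    then show ?thesis using cc_eqI False by blast
  next
    case True
    then have e: "imsq x + qi y * qi x + qj y * qj x + qk y * qk x = 0" by (simp add: a_def quat_eq_iff)
    have "(qi y + qi x)^2 + (qj y + qj x)^2 + (qk y + qk x)^2 = imsq y + imsq x + 2 * (qi y * qi x + qj y * qj x + qk y * qk x)"
      unfolding imsq_def by algebra
    also have "\<dots> = 0" using e s by simp
    finally have "(qi y + qi x)^2 + (qj y + qj x)^2 + (qk y + qk x)^2 + 0^2 = 0" by simp
    then have w: "qi y = - qi x" "qj y = - qj x" "qk y = - qk x" unfolding sq4 by linarith+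
    show ?thesis
    proof (cases "qi x = 0 \<and> qj x = 0")
      case True
      have "qI * x = y * qI" using True w r by (simp add: quat_eq_iff)
      moreover have "qI \<noteq> 0" by (simp add: qI_def quat_eq_iff)
      ultimately show ?thesis using cc_eqI[of qI] by blast
    next
      case False
      define b where "b = Quat 0 (- qj x) (qi x) 0"
      have "b \<noteq> 0" using False by (auto simp: b_def quat_eq_iff)
      moreover have "b * x = y * b" using w r by (simp add: quat_eq_iff b_def algebra_simps)
      ultimately show ?thesis using cc_eqI by blast
    qed
  qed
qed

lemma quat_is_real_imsq: "quat_is_real x \<longleftrightarrow> imsq x = 0"
  unfolding quat_is_real_def imsq_def using sq4[of 0 "qi x" "qj x" "qk x"] by simp

lemma cc_char:
  assumes "\<not> quat_is_real x"
  shows "conj_class x = {y. qre y = qre x \<and> imsq y = imsq x}"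
  using cc_sub cc_sup assms quat_is_real_imsq by blast



lemma qr_comm: "quat_of_real r * q = q * quat_of_real r"
  by (simp add: quat_eq_iff)

lemma qr_add: "quat_of_real (r + s) = quat_of_real r + quat_of_real s"
  by (simp add: quat_eq_iff)
lemma qr_mult: "quat_of_real (r * s) = quat_of_real r * quat_of_real s"
  by (simp add: quat_eq_iff)

lemma qc_add: "quat_of_complex (z + w) = quat_of_complex z + quat_of_complex w"
  by (simp add: quat_eq_iff)
lemma qc_mult: "quat_of_complex (z * w) = quat_of_complex z * quat_of_complex w"
  by (simp add: quat_eq_iff)
lemma qc_one: "quat_of_complex 1 = 1" by (simp add: quat_eq_iff)
lemma qc_zero: "quat_of_complex 0 = 0" by (simp add: quat_eq_iff)
lemma qc_pow: "quat_of_complex (z ^ n) = (quat_of_complex z) ^ n"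
  by (induction n) (simp_all add: qc_one qc_mult)
lemma qc_sum: "quat_of_complex (\<Sum>i\<in>A. f i) = (\<Sum>i\<in>A. quat_of_complex (f i))"
  by (induction A rule: infinite_finite_induct) (simp_all add: qc_zero qc_add)
lemma qc_of_real: "quat_of_complex (complex_of_real r) = quat_of_real r"
  by (simp add: quat_eq_iff)
lemma qJ_qc: "qJ * quat_of_complex w = quat_of_complex (cnj w) * qJ"
  by (simp add: quat_eq_iff)
lemma qc_eq_0_iff: "quat_of_complex F + quat_of_complex G * qJ = 0 \<longleftrightarrow> F = 0 \<and> G = 0"
  by (simp add: quat_eq_iff complex_eq_iff)

definition phi :: "quat \<Rightarrow> complex \<Rightarrow> quat" where
  "phi u z = quat_of_real (Re z) + quat_of_real (Im z) * u"

lemma phi_mult_alg: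
  fixes u0 u1 u2 u3 a b c d :: real
  assumes "u0 * u0 - u1 * u1 - u2 * u2 - u3 * u3 = -1" "u0 * u1 + u1 * u0 + u2 * u3 - u3 * u2 = 0"
    "u0 * u2 - u1 * u3 + u2 * u0 + u3 * u1 = 0" "u0 * u3 + u1 * u2 - u2 * u1 + u3 * u0 = 0"
  shows "a * c - b * d + (a * d + b * c) * u0 = (a + b * u0) * (c + d * u0) - b * u1 * (d * u1) - b * u2 * (d * u2) - b * u3 * (d * u3)"
    "(a * d + b * c) * u1 = (a + b * u0) * (d * u1) + b * u1 * (c + d * u0) + b * u2 * (d * u3) - b * u3 * (d * u2)"
    "(a * d + b * c) * u2 = (a + b * u0) * (d * u2) - b * u1 * (d * u3) + b * u2 * (c + d * u0) + b * u3 * (d * u1)"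
    "(a * d + b * c) * u3 = (a + b * u0) * (d * u3) + b * u1 * (d * u2) - b * u2 * (d * u1) + b * u3 * (c + d * u0)"
  using assms by algebra+

lemma phi_mult:
  assumes u: "u * u = -1" shows "phi u (z * w) = phi u z * phi u w"
proof -
  from u have e: "qre u * qre u - qi u * qi u - qj u * qj u - qk u * qk u = -1" "qre u * qi u + qi u * qre u + qj u * qk u - qk u * qj u = 0"
    "qre u * qj u - qi u * qk u + qj u * qre u + qk u * qi u = 0" "qre u * qk u + qi u * qj u - qj u * qi u + qk u * qre u = 0"
    by (simp_all add: quat_eq_iff)
  show ?thesis unfolding quat_eq_iff phi_def
    using phi_mult_alg[OF e, where a="Re z" and b="Im z" and c="Re w" and d="Im w"] by simp
qed

lemma phi_one: "phi u 1 = 1" by (simp add: phi_def quat_eq_iff)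

lemma phi_pow: "u * u = -1 \<Longrightarrow> phi u (z ^ n) = (phi u z) ^ n"
  by (induction n) (simp_all add: phi_one phi_mult)

lemma phi_qI: "phi qI z = quat_of_complex z"
  by (simp add: phi_def quat_eq_iff)
lemma phi_mqI: "phi (- qI) z = quat_of_complex (cnj z)"
  by (simp add: phi_def quat_eq_iff)
lemma qI_sq: "qI * qI = -1" by (simp add: quat_eq_iff)
lemma mqI_sq: "(- qI) * (- qI) = -1" by (simp add: quat_eq_iff)

lemma P_phi:
  assumes u: "u * u = -1"
  shows "(\<Sum>i=1..n. p i * (phi u z)^i) + quat_of_real dd =
     ((\<Sum>i=1..n. p i * quat_of_real (Re (z^i))) + quat_of_real dd) + (\<Sum>i=1..n. p i * quat_of_real (Im (z^i))) * u"
proof -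
  have "(\<Sum>i=1..n. p i * (phi u z)^i) = (\<Sum>i=1..n. p i * quat_of_real (Re (z^i)) + p i * quat_of_real (Im (z^i)) * u)"
    by (rule sum.cong, simp, simp only: phi_pow[OF u, symmetric], simp add: phi_def algebra_simps)
  then show ?thesis by (simp add: sum.distrib sum_distrib_right algebra_simps)
qed

lemma P_quat:
  assumes split: "\<And>i. i \<in> {1..n} \<Longrightarrow> p i = quat_of_complex (ta i) + quat_of_complex (tb i) * qJ"
  shows "(\<Sum>i=1..n. p i * (quat_of_complex z)^i) + quat_of_real dd =
     quat_of_complex ((\<Sum>i=1..n. ta i * z ^ i) + complex_of_real dd) + quat_of_complex (\<Sum>i=1..n. tb i * (cnj z) ^ i) * qJ"
proof -
  have "(\<Sum>i=1..n. p i * (quat_of_complex z)^i) = (\<Sum>i=1..n. quat_of_complex (ta i * z ^ i) + quat_of_complex (tb i * (cnj z) ^ i) * qJ)"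
  proof (rule sum.cong)
    fix i assume i: "i \<in> {1..n}"
    have "qJ * quat_of_complex (z ^ i) = quat_of_complex (cnj z ^ i) * qJ" by (simp add: qJ_qc)
    then show "p i * (quat_of_complex z)^i = quat_of_complex (ta i * z ^ i) + quat_of_complex (tb i * (cnj z) ^ i) * qJ"
      by (simp add: split[OF i] qc_mult qc_pow[symmetric] distrib_right mult.assoc)
  qed simp
  then show ?thesis by (simp add: sum.distrib qc_sum qc_add qc_of_real sum_distrib_right algebra_simps)
qed

lemma cnj_poly: "cnj ((\<Sum>i=1..n. t i * (cnj z) ^ i) + complex_of_real d) = (\<Sum>i=1..n. cnj (t i) * z ^ i) + complex_of_real d"
  by (simp add: cnj_sum)
lemma cnj_poly0: "cnj (\<Sum>i=1..n. t i * (cnj z) ^ i) = (\<Sum>i=1..n. cnj (t i) * z ^ i)"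
  by (simp add: cnj_sum)



definition sph :: "complex \<Rightarrow> quat set" where
  "sph \<eta> = {y. qre y = Re \<eta> \<and> imsq y = (Im \<eta>)^2}"

lemma sph_cnj: "sph (cnj \<eta>) = sph \<eta>" by (simp add: sph_def)

lemma cc_sph: "Im \<eta> \<noteq> 0 \<Longrightarrow> y \<in> sph \<eta> \<Longrightarrow> conj_class y = sph \<eta>"
  using cc_char[of y] quat_is_real_imsq[of y] unfolding sph_def by auto

lemma cc_quat_sph: "Im \<eta> \<noteq> 0 \<Longrightarrow> conj_class (quat_of_complex \<eta>) = sph \<eta>"
  by (rule cc_sph) (auto simp: sph_def imsq_def)

lemma quat_in_sph: "quat_of_complex \<eta> \<in> sph \<eta>" "quat_of_complex (cnj \<eta>) \<in> sph \<eta>"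
  by (auto simp: sph_def imsq_def)

lemma sph_not_real: "Im \<eta> \<noteq> 0 \<Longrightarrow> y \<in> sph \<eta> \<Longrightarrow> \<not> quat_is_real y"
  using quat_is_real_imsq unfolding sph_def by auto

lemma sph_eq: assumes "y \<in> sph \<eta>" "y \<in> sph \<eta>'" shows "\<eta>' = \<eta> \<or> \<eta>' = cnj \<eta>"
proof -
  from assms have "Re \<eta>' = Re \<eta>" "(Im \<eta>')^2 = (Im \<eta>)^2" by (auto simp: sph_def)
  then show ?thesis by (auto simp: complex_eq_iff power2_eq_iff)
qed

lemma unit_sq: "qre u = 0 \<Longrightarrow> imsq u = 1 \<Longrightarrow> u * u = -1"
  unfolding imsq_def by (simp add: quat_eq_iff power2_eq_square mult.commute)

lemma sph_param:
  assumes "Im \<eta> \<noteq> 0" "y \<in> sph \<eta>"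
  shows "\<exists>u. u * u = -1 \<and> qre u = 0 \<and> imsq u = 1 \<and> y = phi u \<eta>"
proof -
  let ?b = "Im \<eta>"
  define u where "u = Quat 0 (qi y / ?b) (qj y / ?b) (qk y / ?b)"
  from assms have r: "qre y = Re \<eta>" and s: "(qi y)^2 + (qj y)^2 + (qk y)^2 = ?b^2"
    by (auto simp: sph_def imsq_def)
  have iu: "imsq u = 1" unfolding u_def imsq_def using assms(1) s
    by (simp add: power_divide add_divide_distrib[symmetric])
  moreover have q: "qre u = 0" by (simp add: u_def)
  moreover have "u * u = -1" using unit_sq[OF q iu] .
  moreover have "y = phi u \<eta>" using assms(1) r by (simp add: quat_eq_iff u_def phi_def)
  ultimately show ?thesis by blast
qed

lemma sph_phi:
  assumes "qre u = 0" "imsq u = 1"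
  shows "phi u \<eta> \<in> sph \<eta>" "u * u = -1"
proof -
  show "phi u \<eta> \<in> sph \<eta>" using assms unfolding sph_def imsq_def phi_def
    by (simp add: power_mult_distrib distrib_left[symmetric])
  show "u * u = -1" using unit_sq assms .
qed

lemma phi_inj: "Im \<eta> \<noteq> 0 \<Longrightarrow> phi u \<eta> = phi v \<eta> \<Longrightarrow> u = v"
  by (simp add: quat_eq_iff phi_def)


lemma unit_alg:
  fixes D :: real and F G :: complex
  assumes "D = (cmod F)^2 + (cmod G)^2" "D \<noteq> 0"
  shows "(((cmod G)^2 - (cmod F)^2)/D)^2 + (2*Im(G*cnj F)/D)^2 + (-2*Re(G*cnj F)/D)^2 = 1"
proof -
  have "((cmod G)^2 - (cmod F)^2)^2 + (2*Im(G*cnj F))^2 + (-2*Re(G*cnj F))^2 = D^2"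
    unfolding assms(1) cmod_power2 by (simp add: power2_eq_square algebra_simps)
  then show ?thesis using assms(2) by (simp add: power_divide add_divide_distrib[symmetric])
qed

lemma unit1:
  assumes "D = (cmod F)^2 + (cmod G)^2" "D \<noteq> 0"
  shows "imsq (Quat 0 (((cmod G)^2 - (cmod F)^2)/D) (2*Im(G*cnj F)/D) (-2*Re(G*cnj F)/D)) = 1"
  using unit_alg[OF assms] unfolding imsq_def by simp

lemma unit_alg2:
  fixes D :: real and F G :: complex
  assumes "D = (cmod F)^2 + (cmod G)^2" "D \<noteq> 0"
  shows "(((cmod F)^2 - (cmod G)^2)/D)^2 + (-2*Im(G*cnj F)/D)^2 + (2*Re(G*cnj F)/D)^2 = 1"
proof -
  have "((cmod F)^2 - (cmod G)^2)^2 + (-2*Im(G*cnj F))^2 + (2*Re(G*cnj F))^2 = D^2"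
    unfolding assms(1) cmod_power2 by (simp add: power2_eq_square algebra_simps)
  then show ?thesis using assms(2) by (simp add: power_divide add_divide_distrib[symmetric])
qed

lemma unit2:
  assumes "D = (cmod F)^2 + (cmod G)^2" "D \<noteq> 0"
  shows "imsq (Quat 0 (((cmod F)^2 - (cmod G)^2)/D) (-2*Im(G*cnj F)/D) (2*Re(G*cnj F)/D)) = 1"
  using unit_alg2[OF assms] unfolding imsq_def by simp

lemma omega1:
  assumes "D = (cmod F)^2 + (cmod G)^2" "D \<noteq> 0"
  shows "quat_of_real (1 / D) *
              (quat_of_complex (complex_of_real ((cmod G)\<^sup>2) * \<eta>
                                + complex_of_real ((cmod F)\<^sup>2) * cnj \<eta>)
               - quat_of_complex (2 * G * cnj F * complex_of_real (Im \<eta>)) * qK)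
    = phi (Quat 0 (((cmod G)^2 - (cmod F)^2)/D) (2*Im(G*cnj F)/D) (-2*Re(G*cnj F)/D)) \<eta>"
proof -
  have r: "(cmod G)\<^sup>2 * Re \<eta> + (cmod F)\<^sup>2 * Re \<eta> = D * Re \<eta>" using assms(1) by (simp add: algebra_simps)
  show ?thesis using assms(2) unfolding quat_eq_iff phi_def
    apply (simp add: r)
    apply (simp add: algebra_simps minus_divide_left)
    done
qed

lemma omega2:
  assumes "D = (cmod F)^2 + (cmod G)^2" "D \<noteq> 0"
  shows "quat_of_real (1 / D) *
              (quat_of_complex (complex_of_real ((cmod F)\<^sup>2) * \<eta>
                                + complex_of_real ((cmod G)\<^sup>2) * cnj \<eta>)
               + quat_of_complex (2 * G * cnj F * complex_of_real (Im \<eta>)) * qK)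
    = phi (Quat 0 (((cmod F)^2 - (cmod G)^2)/D) (-2*Im(G*cnj F)/D) (2*Re(G*cnj F)/D)) \<eta>"
proof -
  have r: "(cmod F)\<^sup>2 * Re \<eta> + (cmod G)\<^sup>2 * Re \<eta> = D * Re \<eta>" using assms(1) by (simp add: algebra_simps)
  show ?thesis using assms(2) unfolding quat_eq_iff phi_def
    apply (simp add: r)
    apply (simp only: minus_divide_left divide_cancel_right)
    apply (simp add: algebra_simps)
    done
qed


lemma cmod_sq_sum_0: "(cmod F)^2 + (cmod G)^2 = 0 \<longleftrightarrow> F = 0 \<and> G = 0"
  by (smt (verit) norm_eq_zero power2_less_eq_zero_iff zero_le_power2)

locale sphctx =
  fixes P :: "quat \<Rightarrow> quat" and A B :: quat and F1 G1 F2 G2 \<eta> :: complex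
  assumes hP: "\<And>u. u*u = -1 \<Longrightarrow> P (phi u \<eta>) = A + B*u"
    and hQ1: "P (quat_of_complex \<eta>) = quat_of_complex F1 + quat_of_complex G1 * qJ"
    and hQ2: "P (quat_of_complex (cnj \<eta>)) = quat_of_complex F2 + quat_of_complex G2 * qJ"
    and im: "Im \<eta> \<noteq> 0"
begin

lemma h1: "A + B*qI = quat_of_complex F1 + quat_of_complex G1 * qJ"
  using hP[OF qI_sq] hQ1 phi_qI by simp

lemma h2: "A - B*qI = quat_of_complex F2 + quat_of_complex G2 * qJ"
  using hP[OF mqI_sq] hQ2 phi_mqI by simp

lemma Py: assumes "y \<in> sph \<eta>" obtains u where "qre u = 0" "imsq u = 1" "y = phi u \<eta>" "P y = A + B * u"
proof -
  obtain u where u: "u*u = -1" "qre u = 0" "imsq u = 1" "y = phi u \<eta>" using sph_param[OF im assms] by blast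
  have "P y = A + B * u" using hP[OF u(1)] u(4) by simp
  then show thesis using that u by blast
qed

lemma nec: assumes "y \<in> sph \<eta>" "P y = 0" shows "F1 * cnj F2 + G2 * cnj G1 = 0"
proof -
  obtain u where u: "qre u = 0" "imsq u = 1" "y = phi u \<eta>" "P y = A + B * u" using Py[OF assms(1)] by blast
  have "(qi u)^2 + (qj u)^2 + (qk u)^2 = 1" using u(2) by (simp add: imsq_def)
  moreover have "A + B * u = 0" using u(4) assms(2) by simp
  ultimately show ?thesis using core1[OF h1 h2 u(1)] by blast
qed

lemma AB0: "F1 = 0 \<and> G1 = 0 \<and> F2 = 0 \<and> G2 = 0 \<longleftrightarrow> A = 0 \<and> B = 0"
proof
  assume "F1 = 0 \<and> G1 = 0 \<and> F2 = 0 \<and> G2 = 0"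
  then have a: "A + B*qI = 0" "A - B*qI = 0" using h1 h2 by (simp_all add: qc_zero)
  then have c: "qre A - qi B = 0" "qi A + qre B = 0" "qj A + qk B = 0" "qk A - qj B = 0"
     "qre A + qi B = 0" "qi A - qre B = 0" "qj A - qk B = 0" "qk A + qj B = 0"
    by (simp_all only: quat_eq_iff quat_simps qc_simps) simp_all
  then show "A = 0 \<and> B = 0" unfolding quat_eq_iff quat_simps by linarith
next
  assume "A = 0 \<and> B = 0"
  then have "quat_of_complex F1 + quat_of_complex G1 * qJ = 0" "quat_of_complex F2 + quat_of_complex G2 * qJ = 0"
    using h1 h2 by simp_all
  then show "F1 = 0 \<and> G1 = 0 \<and> F2 = 0 \<and> G2 = 0" unfolding qc_eq_0_iff by simp
qed

lemma allzero: assumes "F1 = 0 \<and> G1 = 0 \<and> F2 = 0 \<and> G2 = 0" "y \<in> sph \<eta>" shows "P y = 0"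
proof -
  obtain u where u: "P y = A + B * u" using Py[OF assms(2)] by blast
  then show ?thesis using AB0 assms(1) by simp
qed

lemma notall: assumes "\<not> (F1 = 0 \<and> G1 = 0 \<and> F2 = 0 \<and> G2 = 0)" shows "\<exists>y\<in>sph \<eta>. P y \<noteq> 0"
proof (cases "F1 = 0 \<and> G1 = 0")
  case True
  then have "P (quat_of_complex (cnj \<eta>)) \<noteq> 0" using assms hQ2 qc_eq_0_iff by simp
  then show ?thesis using quat_in_sph(2) by blast
next
  case False
  then have "P (quat_of_complex \<eta>) \<noteq> 0" using hQ1 qc_eq_0_iff by simp
  then show ?thesis using quat_in_sph(1) by blast
qed

lemma Wlemma:
  assumes na: "\<not> (F1 = 0 \<and> G1 = 0 \<and> F2 = 0 \<and> G2 = 0)" and pt: "F1 * cnj F2 + G2 * cnj G1 = 0"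
    and W: "W = (if (cmod F1)\<^sup>2 + (cmod G2)\<^sup>2 \<noteq> 0 then
            quat_of_real (1 / ((cmod F1)\<^sup>2 + (cmod G2)\<^sup>2)) *
              (quat_of_complex (complex_of_real ((cmod G2)\<^sup>2) * \<eta>
                                + complex_of_real ((cmod F1)\<^sup>2) * cnj \<eta>)
               - quat_of_complex (2 * G2 * cnj F1 * complex_of_real (Im \<eta>)) * qK)
          else
            quat_of_real (1 / ((cmod F2)\<^sup>2 + (cmod G1)\<^sup>2)) *
              (quat_of_complex (complex_of_real ((cmod F2)\<^sup>2) * \<eta>
                                + complex_of_real ((cmod G1)\<^sup>2) * cnj \<eta>)
               + quat_of_complex (2 * G1 * cnj F2 * complex_of_real (Im \<eta>)) * qK))"
  shows "W \<in> sph \<eta> \<and> P W = 0 \<and> (\<forall>y\<in>sph \<eta>. P y = 0 \<longrightarrow> y = W)"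
proof -
  obtain u0 where u0: "qre u0 = 0" "imsq u0 = 1" "A + B * u0 = 0" "W = phi u0 \<eta>"
  proof (cases "(cmod F1)\<^sup>2 + (cmod G2)\<^sup>2 \<noteq> 0")
    case True
    define D where "D = (cmod F1)\<^sup>2 + (cmod G2)\<^sup>2"
    have D: "D = (cmod F1)\<^sup>2 + (cmod G2)\<^sup>2" "D \<noteq> 0" using True D_def by auto
    show ?thesis
      apply (rule that[of "Quat 0 (((cmod G2)^2 - (cmod F1)^2)/D) (2*Im(G2*cnj F1)/D) (-2*Re(G2*cnj F1)/D)"])
         apply simp
        apply (rule unit1[OF D])
       apply (rule core2[OF h1 h2 pt D])
      using W True omega1[OF D, of \<eta>] D_def by simp
  next
    case False
    then have "F1 = 0" "G2 = 0" using cmod_sq_sum_0 by auto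
    then have T: "(cmod F2)\<^sup>2 + (cmod G1)\<^sup>2 \<noteq> 0" using na cmod_sq_sum_0 by auto
    define D where "D = (cmod F2)\<^sup>2 + (cmod G1)\<^sup>2"
    have D: "D = (cmod F2)\<^sup>2 + (cmod G1)\<^sup>2" "D \<noteq> 0" using T D_def by auto
    show ?thesis
      apply (rule that[of "Quat 0 (((cmod F2)^2 - (cmod G1)^2)/D) (-2*Im(G1*cnj F2)/D) (2*Re(G1*cnj F2)/D)"])
         apply simp
        apply (rule unit2[OF D])
       apply (rule core2b[OF h1 h2 pt D])
      using W False omega2[OF D, of \<eta>] D_def by simp
  qed
  have Wsph: "W \<in> sph \<eta>" using sph_phi u0 by simp
  have PW: "P W = 0" using hP[OF sph_phi(2)[OF u0(1,2)]] u0 by simp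
  have "y = W" if y: "y \<in> sph \<eta>" "P y = 0" for y
  proof -
    obtain u where u: "qre u = 0" "imsq u = 1" "y = phi u \<eta>" "P y = A + B * u" using Py[OF y(1)] by blast
    have "A + B * u = A + B * u0" using u(4) y(2) u0(3) by simp
    then have "B * u = B * u0" by simp
    then have "B * (u - u0) = 0" by (simp add: right_diff_distrib)
    moreover have "B \<noteq> 0" using AB0 na u0(3) by auto
    ultimately have "u = u0" using quat_no_zero_div by auto
    then show ?thesis using u u0 by simp
  qed
  then show ?thesis using Wsph PW by blast
qed

end


theorem theorem1:
  fixes n :: nat and p :: "nat \<Rightarrow> quat" and d0 :: real
    and t1 t2 :: "nat \<Rightarrow> complex" and E :: "complex set"
    and P :: "quat \<Rightarrow> quat"
    and f1 f2 f1b f2b ptilde :: "complex \<Rightarrow> complex"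
    and Xi T1 T2 :: "complex set" and \<omega> :: "complex \<Rightarrow> quat"
  assumes n: "n \<ge> 1"
    and pn: "p n \<noteq> 0"
    and d0: "d0 = 0 \<or> d0 = 1"
    and split: "\<And>i. i \<in> {1..n} \<Longrightarrow> p i = quat_of_complex (t1 i) + quat_of_complex (t2 i) * qJ"
  defines "P \<equiv> \<lambda>x. (\<Sum>i=1..n. p i * x ^ i) + quat_of_real d0"
    and "f1 \<equiv> \<lambda>t. (\<Sum>i=1..n. t1 i * t ^ i) + complex_of_real d0"
    and "f2 \<equiv> \<lambda>t. (\<Sum>i=1..n. t2 i * t ^ i)"
    and "f1b \<equiv> \<lambda>t. (\<Sum>i=1..n. cnj (t1 i) * t ^ i) + complex_of_real d0"
    and "f2b \<equiv> \<lambda>t. (\<Sum>i=1..n. cnj (t2 i) * t ^ i)"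
    and "ptilde \<equiv> \<lambda>t. f1 t * f1b t + f2 t * f2b t"
  assumes E_sub: "E \<subseteq> {\<eta>. ptilde \<eta> = 0 \<and> Im \<eta> \<noteq> 0}"
    and E_rep: "\<And>\<eta>. ptilde \<eta> = 0 \<Longrightarrow> Im \<eta> \<noteq> 0 \<Longrightarrow> (\<eta> \<in> E \<longleftrightarrow> cnj \<eta> \<notin> E)"
  defines "Xi \<equiv> {\<xi>. ptilde \<xi> = 0 \<and> Im \<xi> = 0}"
    and "T1 \<equiv> {\<eta> \<in> E. f1 \<eta> = 0 \<and> f2 \<eta> = 0 \<and> f1b \<eta> = 0 \<and> f2b \<eta> = 0}"
    and "T2 \<equiv> E - T1"
    and "\<omega> \<equiv> \<lambda>\<eta>. if (cmod (f1 \<eta>))\<^sup>2 + (cmod (f2 \<eta>))\<^sup>2 \<noteq> 0 then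
            quat_of_real (1 / ((cmod (f1 \<eta>))\<^sup>2 + (cmod (f2 \<eta>))\<^sup>2)) *
              (quat_of_complex (complex_of_real ((cmod (f2 \<eta>))\<^sup>2) * \<eta>
                                + complex_of_real ((cmod (f1 \<eta>))\<^sup>2) * cnj \<eta>)
               - quat_of_complex (2 * f2 \<eta> * cnj (f1 \<eta>) * complex_of_real (Im \<eta>)) * qK)
          else
            quat_of_real (1 / ((cmod (f1 (cnj \<eta>)))\<^sup>2 + (cmod (f2 (cnj \<eta>)))\<^sup>2)) *
              (quat_of_complex (complex_of_real ((cmod (f1 (cnj \<eta>)))\<^sup>2) * \<eta>
                                + complex_of_real ((cmod (f2 (cnj \<eta>)))\<^sup>2) * cnj \<eta>)
               + quat_of_complex (2 * f2 (cnj \<eta>) * cnj (f1 (cnj \<eta>)) * complex_of_real (Im \<eta>)) * qK)"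
  shows "{x. P x = 0} = quat_of_complex ` Xi \<union> \<omega> ` T2 \<union> (\<Union>\<eta>\<in>T1. conj_class (quat_of_complex \<eta>))
     \<and> quat_of_complex ` Xi \<inter> \<omega> ` T2 = {}
     \<and> quat_of_complex ` Xi \<inter> (\<Union>\<eta>\<in>T1. conj_class (quat_of_complex \<eta>)) = {}
     \<and> \<omega> ` T2 \<inter> (\<Union>\<eta>\<in>T1. conj_class (quat_of_complex \<eta>)) = {}
     \<and> inj_on \<omega> T2
     \<and> disjoint_family_on (\<lambda>\<eta>. conj_class (quat_of_complex \<eta>)) T1
     \<and> {x. isolated_zero P x} = quat_of_complex ` Xi \<union> \<omega> ` T2
     \<and> {x. spherical_zero P x} = (\<Union>\<eta>\<in>T1. conj_class (quat_of_complex \<eta>))"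
proof -
  have fb1: "f1b z = cnj (f1 (cnj z))" for z unfolding f1_def f1b_def by (simp add: cnj_poly)
  have fb2: "f2b z = cnj (f2 (cnj z))" for z unfolding f2_def f2b_def by (simp add: cnj_poly0)
  have PQ: "P (quat_of_complex z) = quat_of_complex (f1 z) + quat_of_complex (f2 (cnj z)) * qJ" for z
    unfolding P_def f1_def f2_def using P_quat[where n=n and p=p and ta=t1 and tb=t2 and z=z and dd=d0] split by simp
  define AA where "AA = (\<lambda>\<eta>. (\<Sum>i=1..n. p i * quat_of_real (Re (\<eta>^i))) + quat_of_real d0)"
  define BB where "BB = (\<lambda>\<eta>. (\<Sum>i=1..n. p i * quat_of_real (Im (\<eta>^i))))"
  have ctx: "sphctx P (AA \<eta>) (BB \<eta>) (f1 \<eta>) (f2 (cnj \<eta>)) (f1 (cnj \<eta>)) (f2 \<eta>) \<eta>" if im: "Im \<eta> \<noteq> 0" for \<eta>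
  proof
    show "P (phi u \<eta>) = AA \<eta> + BB \<eta> * u" if "u * u = -1" for u
      unfolding P_def AA_def BB_def using P_phi[OF that, where n=n and p=p and z=\<eta> and dd=d0] by simp
    show "P (quat_of_complex \<eta>) = quat_of_complex (f1 \<eta>) + quat_of_complex (f2 (cnj \<eta>)) * qJ" by (rule PQ)
    show "P (quat_of_complex (cnj \<eta>)) = quat_of_complex (f1 (cnj \<eta>)) + quat_of_complex (f2 \<eta>) * qJ"
      using PQ[of "cnj \<eta>"] by simp
  qed (rule im)
  have pt: "ptilde \<eta> = f1 \<eta> * cnj (f1 (cnj \<eta>)) + f2 \<eta> * cnj (f2 (cnj \<eta>))" for \<eta>
    unfolding ptilde_def fb1 fb2 by simp
  define allz where "allz = (\<lambda>\<eta>. f1 \<eta> = 0 \<and> f2 (cnj \<eta>) = 0 \<and> f1 (cnj \<eta>) = 0 \<and> f2 \<eta> = 0)"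
  have T1_iff: "\<eta> \<in> T1 \<longleftrightarrow> \<eta> \<in> E \<and> allz \<eta>" for \<eta>
    unfolding T1_def allz_def fb1 fb2 by auto
  have K1: "ptilde \<eta> = 0" if "Im \<eta> \<noteq> 0" "y \<in> sph \<eta>" "P y = 0" for \<eta> y
    using sphctx.nec[OF ctx[OF that(1)] that(2,3)] pt by simp
  have K2: "P y = 0" if "Im \<eta> \<noteq> 0" "allz \<eta>" "y \<in> sph \<eta>" for \<eta> y
    using sphctx.allzero[OF ctx[OF that(1)] _ that(3)] that(2) unfolding allz_def by blast
  have K3: "\<omega> \<eta> \<in> sph \<eta> \<and> P (\<omega> \<eta>) = 0 \<and> (\<forall>y\<in>sph \<eta>. P y = 0 \<longrightarrow> y = \<omega> \<eta>)"
    if "Im \<eta> \<noteq> 0" "\<not> allz \<eta>" "ptilde \<eta> = 0" for \<eta>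
    apply (rule sphctx.Wlemma[OF ctx[OF that(1)]])
    using that(2) apply (simp add: allz_def)
    using that(3) pt apply simp
    unfolding \<omega>_def by simp
  have K4: "\<exists>y\<in>sph \<eta>. P y \<noteq> 0" if "Im \<eta> \<noteq> 0" "\<not> allz \<eta>" for \<eta>
    using sphctx.notall[OF ctx[OF that(1)]] that(2) unfolding allz_def by blast
  have Eprop: "ptilde \<eta> = 0 \<and> Im \<eta> \<noteq> 0 \<and> cnj \<eta> \<notin> E" if "\<eta> \<in> E" for \<eta>
    using E_sub E_rep that by blast
  have sameE: "\<eta>' = \<eta>" if "\<eta> \<in> E" "\<eta>' \<in> E" "y \<in> sph \<eta>" "y \<in> sph \<eta>'" for \<eta> \<eta>' y
    using sph_eq[OF that(3,4)] Eprop that(1,2) by blast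
  have Ceq: "conj_class (quat_of_complex \<eta>) = sph \<eta>" if "\<eta> \<in> E" for \<eta>
    using cc_quat_sph Eprop that by blast
  have real_zero: "ptilde \<xi> = 0 \<longleftrightarrow> P (quat_of_complex \<xi>) = 0" if "Im \<xi> = 0" for \<xi>
  proof -
    have c: "cnj \<xi> = \<xi>" using that by (simp add: complex_eq_iff)
    have "ptilde \<xi> = complex_of_real ((cmod (f1 \<xi>))^2 + (cmod (f2 \<xi>))^2)"
      unfolding pt c by (simp only: complex_norm_square[symmetric] of_real_add)
    then have "ptilde \<xi> = 0 \<longleftrightarrow> f1 \<xi> = 0 \<and> f2 \<xi> = 0" using cmod_sq_sum_0
      by (metis of_real_eq_0_iff)
    then show ?thesis using PQ[of \<xi>] c qc_eq_0_iff by simp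
  qed
  let ?R = "quat_of_complex ` Xi" and ?W = "\<omega> ` T2" and ?U = "\<Union>\<eta>\<in>T1. conj_class (quat_of_complex \<eta>)"
  have Rreal: "quat_is_real x" if "x \<in> ?R" for x using that by (auto simp: quat_is_real_def Xi_def)
  have Wsph: "\<omega> \<eta> \<in> sph \<eta> \<and> P (\<omega> \<eta>) = 0 \<and> (\<forall>y\<in>sph \<eta>. P y = 0 \<longrightarrow> y = \<omega> \<eta>)" if "\<eta> \<in> T2" for \<eta>
    using that K3 Eprop T1_iff unfolding T2_def by blast
  have Wnr: "\<not> quat_is_real x" if "x \<in> ?W" for x
    using that Wsph Eprop sph_not_real unfolding T2_def by blast
  have Umem: "x \<in> ?U \<longleftrightarrow> (\<exists>\<eta>\<in>T1. x \<in> sph \<eta>)" for x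
    using Ceq T1_iff by auto
  have Unr: "\<not> quat_is_real x" if "x \<in> ?U" for x
    using that Umem Eprop sph_not_real T1_iff by blast
  have RZ: "?R \<subseteq> {x. P x = 0}" using real_zero unfolding Xi_def by auto
  have WZ: "?W \<subseteq> {x. P x = 0}" using Wsph by auto
  have UZ: "?U \<subseteq> {x. P x = 0}" using Umem K2 T1_iff Eprop by blast
  have ZS: "{x. P x = 0} \<subseteq> ?R \<union> ?W \<union> ?U"
  proof
    fix x assume "x \<in> {x. P x = 0}"
    then have Px: "P x = 0" by simp
    show "x \<in> ?R \<union> ?W \<union> ?U"
    proof (cases "quat_is_real x")
      case True
      define \<xi> where "\<xi> = complex_of_real (qre x)"
      have x: "x = quat_of_complex \<xi>" using True by (simp add: \<xi>_def quat_eq_iff quat_is_real_def)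
      have "Im \<xi> = 0" by (simp add: \<xi>_def)
      then have "\<xi> \<in> Xi" using real_zero Px x unfolding Xi_def by simp
      then show ?thesis using x by blast
    next
      case False
      then have pos: "imsq x > 0" using quat_is_real_imsq[of x] unfolding imsq_def
        by (metis add_nonneg_nonneg zero_le_power2 order_le_less)
      define \<eta>0 where "\<eta>0 = Complex (qre x) (sqrt (imsq x))"
      have im0: "Im \<eta>0 \<noteq> 0" using pos by (simp add: \<eta>0_def)
      have x0: "x \<in> sph \<eta>0" using pos by (simp add: \<eta>0_def sph_def)
      have p0: "ptilde \<eta>0 = 0" using K1[OF im0 x0 Px] .
      obtain \<eta> where \<eta>: "\<eta> \<in> E" "x \<in> sph \<eta>"
      proof (cases "\<eta>0 \<in> E")
        case True then show ?thesis using that x0 by blast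
      next
        case False
        then have "cnj \<eta>0 \<in> E" using E_rep[OF p0 im0] by blast
        then show ?thesis using that x0 sph_cnj by metis
      qed
      have im: "Im \<eta> \<noteq> 0" and pe: "ptilde \<eta> = 0" using Eprop \<eta>(1) by auto
      show ?thesis
      proof (cases "allz \<eta>")
        case True
        then have "\<eta> \<in> T1" using T1_iff \<eta>(1) by blast
        then show ?thesis using Umem \<eta>(2) by blast
      next
        case False
        then have "\<eta> \<in> T2" using T1_iff \<eta>(1) unfolding T2_def by blast
        moreover have "x = \<omega> \<eta>" using K3[OF im False pe] \<eta>(2) Px by blast
        ultimately show ?thesis by blast
      qed
    qed
  qed
  have Zeq: "{x. P x = 0} = ?R \<union> ?W \<union> ?U" using RZ WZ UZ ZS by blast
  have RW: "?R \<inter> ?W = {}" using Rreal Wnr by blast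
  have RU: "?R \<inter> ?U = {}" using Rreal Unr by blast
  have WU: "?W \<inter> ?U = {}"
  proof -
    have False if "\<eta> \<in> T2" "\<eta>' \<in> T1" "\<omega> \<eta> \<in> sph \<eta>'" for \<eta> \<eta>'
    proof -
      have "\<eta> \<in> E" "\<eta>' \<in> E" using that(1,2) T1_iff unfolding T2_def by auto
      then have "\<eta>' = \<eta>" using sameE Wsph[OF that(1)] that(3) by blast
      then show False using that(1,2) unfolding T2_def by blast
    qed
    then show ?thesis using Umem by blast
  qed
  have inj: "inj_on \<omega> T2"
  proof (rule inj_onI)
    fix \<eta> \<eta>' assume a: "\<eta> \<in> T2" "\<eta>' \<in> T2" "\<omega> \<eta> = \<omega> \<eta>'"
    have "\<eta> \<in> E" "\<eta>' \<in> E" using a(1,2) unfolding T2_def by auto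
    then show "\<eta> = \<eta>'" using sameE Wsph a by metis
  qed
  have disj: "disjoint_family_on (\<lambda>\<eta>. conj_class (quat_of_complex \<eta>)) T1"
    unfolding disjoint_family_on_def
  proof (intro ballI impI)
    fix \<eta> \<eta>' assume a: "\<eta> \<in> T1" "\<eta>' \<in> T1" "\<eta> \<noteq> \<eta>'"
    have e: "\<eta> \<in> E" "\<eta>' \<in> E" using a T1_iff by auto
    show "conj_class (quat_of_complex \<eta>) \<inter> conj_class (quat_of_complex \<eta>') = {}"
      using sameE[OF e] a(3) Ceq e by auto
  qed
  have sph_char: "{x. spherical_zero P x} = ?U"
  proof (intro set_eqI iffI)
    fix x assume "x \<in> {x. spherical_zero P x}"
    then have s: "P x = 0" "\<not> quat_is_real x" "\<forall>w\<in>conj_class x. P w = 0" unfolding spherical_zero_def by auto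
    have "x \<notin> ?R" using s Rreal by blast
    moreover have "x \<notin> ?W"
    proof
      assume "x \<in> ?W"
      then obtain \<eta> where e: "\<eta> \<in> T2" "x = \<omega> \<eta>" by blast
      have im: "Im \<eta> \<noteq> 0" "\<not> allz \<eta>" using e(1) Eprop T1_iff unfolding T2_def by auto
      have "conj_class x = sph \<eta>" using cc_sph[OF im(1)] Wsph[OF e(1)] e(2) by simp
      then show False using K4[OF im] s(3) by auto
    qed
    ultimately show "x \<in> ?U" using s(1) Zeq by blast
  next
    fix x assume x: "x \<in> ?U"
    then obtain \<eta> where e: "\<eta> \<in> T1" "x \<in> sph \<eta>" using Umem by blast
    have im: "Im \<eta> \<noteq> 0" "allz \<eta>" using e(1) Eprop T1_iff by auto
    have "conj_class x = sph \<eta>" using cc_sph[OF im(1) e(2)] .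
    then have "\<forall>w\<in>conj_class x. P w = 0" using K2[OF im] by auto
    then show "x \<in> {x. spherical_zero P x}" using x UZ Unr unfolding spherical_zero_def by auto
  qed
  have "{x. isolated_zero P x} = {x. P x = 0} - {x. spherical_zero P x}"
    unfolding isolated_zero_def by auto
  also have "\<dots> = ?R \<union> ?W" unfolding Zeq sph_char using RU WU by blast
  finally have iso_char: "{x. isolated_zero P x} = ?R \<union> ?W" .
  show ?thesis using Zeq RW RU WU inj disj sph_char iso_char by blast
qed


end
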